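(* Let $\mathbf M=(M,N)$ be a flag matroid of rank $(1,n-1)$ on $[n]$. The polytope $P_{\mathbf M}$ is contained in the boundary of $\Delta(1,n-1;n)$ if and only if there is no element $i\in[n]$ which is neither a loop of $M$ nor a coloop of $N$.
   Context: A flag matroid $(M,N)$ of rank $(1,n-1)$: $M$ a rank-1 matroid, $N$ a rank-$(n-1)$ matroid on $[n]$, every flat of $M$ being a flat of $N$. With $e_B=\sum_{i\in B}e_i$, $P_{\mathbf M}=\operatorname{conv}\{e_i:\{i\}\text{ basis of }M\}+\operatorname{conv}\{e_B:B\text{ basis of }N\}$, and $\Delta(1,n-1;n)$ is the polytope of the flag of uniform matroids $(U_{1,n},U_{n-1,n})$, i.e. $\Delta(1,n)+\Delta(n-1,n)$ where $\Delta(d,n)=\operatorname{conv}\{e_B:|B|=d\}$ (both may be translated by $-(1,\dots,1)$; boundary is taken relative to the affine hull of $\Delta(1,n-1;n)$). *)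

theory Defs
  imports "HOL-Analysis.Analysis"
begin

text \<open>Matroids on the finite ground set UNIV :: 'n set (this is [n], n = CARD('n)),
  given by their set of bases.\<close>

definition matroid_bases :: "'n::finite set set \<Rightarrow> bool" where
  "matroid_bases \<B> \<longleftrightarrow> \<B> \<noteq> {} \<and>
     (\<forall>B1\<in>\<B>. \<forall>B2\<in>\<B>. \<forall>x\<in>B1 - B2. \<exists>y\<in>B2 - B1. insert y (B1 - {x}) \<in> \<B>)"

definition mrank :: "'n::finite set set \<Rightarrow> 'n set \<Rightarrow> nat" where
  "mrank \<B> X = Max ((\<lambda>B. card (X \<inter> B)) ` \<B>)"

definition is_flat :: "'n::finite set set \<Rightarrow> 'n set \<Rightarrow> bool" where
  "is_flat \<B> F \<longleftrightarrow> (\<forall>e. e \<notin> F \<longrightarrow> mrank \<B> (insert e F) > mrank \<B> F)"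

definition is_loop :: "'n::finite set set \<Rightarrow> 'n \<Rightarrow> bool" where
  "is_loop \<B> i \<longleftrightarrow> (\<forall>B\<in>\<B>. i \<notin> B)"

definition is_coloop :: "'n::finite set set \<Rightarrow> 'n \<Rightarrow> bool" where
  "is_coloop \<B> i \<longleftrightarrow> (\<forall>B\<in>\<B>. i \<in> B)"

definition flag_matroid :: "'n::finite set set \<Rightarrow> 'n set set \<Rightarrow> bool" where
  "flag_matroid \<B>M \<B>N \<longleftrightarrow> matroid_bases \<B>M \<and> matroid_bases \<B>N \<and>
     (\<forall>F. is_flat \<B>M F \<longrightarrow> is_flat \<B>N F)"

definition indicator_vec :: "'n::finite set \<Rightarrow> real^'n" where
  "indicator_vec B = (\<chi> i. if i \<in> B then 1 else 0)"

definition minkowski_sum :: "(real^'n) set \<Rightarrow> (real^'n) set \<Rightarrow> (real^'n) set" where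
  "minkowski_sum P Q = {x + y | x y. x \<in> P \<and> y \<in> Q}"

definition matroid_polytope :: "'n::finite set set \<Rightarrow> (real^'n) set" where
  "matroid_polytope \<B> = convex hull (indicator_vec ` \<B>)"

definition flag_polytope :: "'n::finite set set \<Rightarrow> 'n set set \<Rightarrow> (real^'n) set" where
  "flag_polytope \<B>M \<B>N = minkowski_sum (matroid_polytope \<B>M) (matroid_polytope \<B>N)"

definition hypersimplex :: "nat \<Rightarrow> (real^'n::finite) set" where
  "hypersimplex d = convex hull (indicator_vec ` {B. card B = d})"

definition Delta_1_nm1 :: "(real^'n::finite) set" where
  "Delta_1_nm1 = minkowski_sum (hypersimplex 1) (hypersimplex (CARD('n) - 1))"

end

theory Submission
  imports Defs
begin

lemma ind_inner: "indicator_vec A \<bullet> indicator_vec B = real (card (A \<inter> B))"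
proof -
  have "indicator_vec A \<bullet> indicator_vec B = (\<Sum>i\<in>UNIV. if i \<in> A \<inter> B then 1 else (0::real))"
    unfolding inner_vec_def indicator_vec_def by (intro sum.cong) auto
  also have "\<dots> = real (card (A \<inter> B))"
    by (simp add: sum.If_cases Int_def)
  finally show ?thesis .
qed

lemma ind_inj: "inj indicator_vec"
proof (rule injI)
  fix A B :: "'n::finite set" assume h: "indicator_vec A = indicator_vec B"
  show "A = B"
  proof (rule set_eqI)
    fix i
    have "indicator_vec A $ i = indicator_vec B $ i" using h by simp
    then show "i \<in> A \<longleftrightarrow> i \<in> B" unfolding indicator_vec_def by (auto split: if_splits)
  qed
qed

lemma card_m1: 
  fixes B :: "'n::finite set"
  assumes "card B = CARD('n) - 1"
  shows "\<exists>j. B = - {j}"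
proof -
  have "CARD('n) > 0" by simp
  then have "card B < card (UNIV::'n set)" using assms by simp
  then obtain j where j: "j \<notin> B" by (metis UNIV_I card_mono finite_UNIV le_eq_less_or_eq not_le subsetI subset_antisym)
  have "B \<subseteq> - {j}" using j by auto
  moreover have "card (- {j}) = CARD('n) - 1"
    by (simp add: Compl_eq_Diff_UNIV card_Diff_singleton)
  ultimately have "B = - {j}" using assms by (intro card_subset_eq) auto
  then show ?thesis by blast
qed

lemma sets1: "{B::'n::finite set. card B = 1} = range (\<lambda>j. {j})"
  by (auto simp: card_1_singleton_iff)

lemma setsm1: "{B::'n::finite set. card B = CARD('n) - 1} = range (\<lambda>j. - {j})"
proof -
  have "card (- {j::'n}) = CARD('n) - 1" for j
    by (simp add: Compl_eq_Diff_UNIV card_Diff_singleton)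
  then show ?thesis using card_m1 by fastforce
qed

lemma not_rel_int:
  fixes D :: "(real^'n::finite) set"
  assumes "x \<in> D" "y \<in> D" "\<forall>z\<in>D. a \<bullet> z \<le> a \<bullet> x" "a \<bullet> y < a \<bullet> x"
  shows "x \<notin> rel_interior D"
proof
  assume "x \<in> rel_interior D"
  then obtain e where e: "e > 0" "cball x e \<inter> affine hull D \<subseteq> D"
    using mem_rel_interior_cball by blast
  have xy: "x \<noteq> y" using assms(4) by auto
  define t where "t = e / norm (x - y)"
  have t: "t > 0" using xy e by (simp add: t_def)
  define z where "z = (1 + t) *\<^sub>R x + (- t) *\<^sub>R y"
  have "z - x = t *\<^sub>R (x - y)" by (simp add: z_def algebra_simps)
  then have "dist x z = t * norm (x - y)" using t by (metis dist_commute dist_norm norm_scaleR abs_of_pos)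
  also have "\<dots> = e" using xy by (simp add: t_def)
  finally have "z \<in> cball x e" by simp
  moreover have "z \<in> affine hull D"
    unfolding z_def
    by (rule mem_affine[OF affine_affine_hull]) (auto intro: hull_inc assms)
  ultimately have "z \<in> D" using e by blast
  then have "a \<bullet> z \<le> a \<bullet> x" using assms(3) by blast
  moreover have "a \<bullet> z = a \<bullet> x + t * (a \<bullet> x - a \<bullet> y)"
    by (simp add: z_def inner_add_right algebra_simps)
  moreover have "t * (a \<bullet> x - a \<bullet> y) > 0" using t assms(4) by simp
  ultimately show False by linarith
qed

lemma hull_le:
  fixes V :: "(real^'n::finite) set"
  assumes "\<forall>v\<in>V. a \<bullet> v \<le> c" "x \<in> convex hull V"
  shows "a \<bullet> x \<le> c"
proof -
  have "convex hull V \<subseteq> {x. a \<bullet> x \<le> c}"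
    by (rule hull_minimal) (use assms convex_halfspace_le in auto)
  then show ?thesis using assms by auto
qed

lemma hull_ge:
  fixes V :: "(real^'n::finite) set"
  assumes "\<forall>v\<in>V. a \<bullet> v \<ge> c" "x \<in> convex hull V"
  shows "a \<bullet> x \<ge> c"
proof -
  have "convex hull V \<subseteq> {x. a \<bullet> x \<ge> c}"
    by (rule hull_minimal) (use assms convex_halfspace_ge in auto)
  then show ?thesis using assms by auto
qed

lemma mink_eq: "minkowski_sum P Q = P + Q"
  unfolding minkowski_sum_def set_plus_def by auto

lemma bary:
  fixes f :: "'n::finite \<Rightarrow> real^'m::finite"
  assumes "inj f"
  shows "(\<Sum>j\<in>UNIV. (1 / real CARD('n)) *\<^sub>R f j) \<in> rel_interior (convex hull (range f))"
proof -
  define u where "u = (\<lambda>x::real^'m. 1 / real CARD('n))"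
  have fin: "finite (range f)" by simp
  have c: "card (range f) = CARD('n)" using assms by (simp add: card_image)
  have "sum u (range f) = 1" using c by (simp add: u_def)
  moreover have "sum (\<lambda>x. u x *\<^sub>R x) (range f) = (\<Sum>j\<in>UNIV. (1 / real CARD('n)) *\<^sub>R f j)"
    using assms by (simp add: sum.reindex u_def)
  moreover have "\<forall>x\<in>range f. 0 < u x" by (simp add: u_def)
  ultimately show ?thesis
    using explicit_subset_rel_interior_convex_hull_minimal[OF fin] by blast
qed

lemma H1_eq: "hypersimplex 1 = convex hull (range (\<lambda>j. indicator_vec {j}))"
  unfolding hypersimplex_def sets1 by (simp add: image_image)

lemma Hm1_eq: "(hypersimplex (CARD('n) - 1) :: (real^'n::finite) set)
   = convex hull (range (\<lambda>j::'n. indicator_vec (- {j})))"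
  unfolding hypersimplex_def setsm1 by (simp add: image_image)

lemma ones_relint: "((\<chi> i. 1) :: real^'n::finite) \<in> rel_interior (Delta_1_nm1 :: (real^'n) set)"
proof -
  define b1 where "b1 = (\<Sum>j\<in>UNIV. (1 / real CARD('n)) *\<^sub>R (indicator_vec {j} :: real^'n))"
  define b2 where "b2 = (\<Sum>j\<in>UNIV. (1 / real CARD('n)) *\<^sub>R (indicator_vec (- {j}) :: real^'n))"
  have i1: "inj (\<lambda>j::'n. indicator_vec {j} :: real^'n)"
    using ind_inj unfolding inj_def by (metis singleton_inject)
  have i2: "inj (\<lambda>j::'n. indicator_vec (- {j}) :: real^'n)"
    using ind_inj unfolding inj_def by (metis compl_eq_compl_iff singleton_inject)
  have r1: "b1 \<in> rel_interior (hypersimplex 1)"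
    unfolding H1_eq b1_def by (rule bary[OF i1])
  have r2: "b2 \<in> rel_interior (hypersimplex (CARD('n) - 1))"
    unfolding Hm1_eq b2_def by (rule bary[OF i2])
  have "b1 + b2 = (\<chi> i. 1)"
  proof (subst vec_eq_iff, intro allI)
    fix k :: 'n
    have "(b1 + b2) $ k = (\<Sum>j\<in>UNIV. (1 / real CARD('n)) * (if k \<in> {j} then 1 else 0)
           + (1 / real CARD('n)) * (if k \<in> - {j} then 1 else 0))"
      unfolding b1_def b2_def by (simp add: indicator_vec_def sum.distrib)
    also have "\<dots> = (\<Sum>j\<in>(UNIV::'n set). 1 / real CARD('n))"
      by (intro sum.cong) auto
    also have "\<dots> = 1" by simp
    finally show "(b1 + b2) $ k = (\<chi> i. 1) $ k" by simp
  qed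
  moreover have "rel_interior (Delta_1_nm1 :: (real^'n) set)
      = rel_interior (hypersimplex 1) + rel_interior (hypersimplex (CARD('n) - 1))"
    unfolding Delta_1_nm1_def mink_eq hypersimplex_def
    by (rule rel_interior_sum) (auto simp: convex_convex_hull)
  ultimately show ?thesis using r1 r2 by (metis set_plus_intro)
qed

theorem proposition6p2:
  fixes BM BN :: "'n::finite set set"
  assumes "flag_matroid BM BN"
    and "\<forall>B\<in>BM. card B = 1"
    and "\<forall>B\<in>BN. card B = CARD('n) - 1"
  shows "flag_polytope BM BN \<subseteq> rel_frontier (Delta_1_nm1 :: (real^'n) set)
     \<longleftrightarrow> \<not> (\<exists>i. \<not> is_loop BM i \<and> \<not> is_coloop BN i)"
proof
  assume sub: "flag_polytope BM BN \<subseteq> rel_frontier (Delta_1_nm1 :: (real^'n) set)"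
  show "\<not> (\<exists>i. \<not> is_loop BM i \<and> \<not> is_coloop BN i)"
  proof
    assume "\<exists>i. \<not> is_loop BM i \<and> \<not> is_coloop BN i"
    then obtain i where i1: "\<not> is_loop BM i" and i2: "\<not> is_coloop BN i" by blast
    from i1 obtain B where B: "B \<in> BM" "i \<in> B" unfolding is_loop_def by blast
    then have "B = {i}" using assms(2) by (metis card_1_singletonE singletonD)
    with B have Bi: "{i} \<in> BM" by simp
    from i2 obtain C where C: "C \<in> BN" "i \<notin> C" unfolding is_coloop_def by blast
    then obtain j where "C = - {j}" using assms(3) card_m1 by blast
    with C have Ci: "- {i} \<in> BN" by auto
    have "indicator_vec {i} \<in> matroid_polytope BM"
      unfolding matroid_polytope_def using Bi by (intro hull_inc) simp
    moreover have "indicator_vec (- {i}) \<in> matroid_polytope BN"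
      unfolding matroid_polytope_def using Ci by (intro hull_inc) simp
    moreover have "indicator_vec {i} + indicator_vec (- {i}) = ((\<chi> k. 1) :: real^'n)"
      by (simp add: vec_eq_iff indicator_vec_def)
    ultimately have "((\<chi> k. 1) :: real^'n) \<in> flag_polytope BM BN"
      unfolding flag_polytope_def minkowski_sum_def by (metis (mono_tags, lifting) mem_Collect_eq)
    with sub have "((\<chi> k. 1) :: real^'n) \<in> rel_frontier Delta_1_nm1" by blast
    then show False using ones_relint unfolding rel_frontier_def by blast
  qed
next
  assume no: "\<not> (\<exists>i. \<not> is_loop BM i \<and> \<not> is_coloop BN i)"
  define S where "S = {i. \<not> is_loop BM i}"
  define a where "a = (indicator_vec S :: real^'n)"
  have PM: "\<forall>v\<in>indicator_vec ` BM. a \<bullet> v \<ge> 1"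
  proof
    fix v assume "v \<in> indicator_vec ` BM"
    then obtain B where B: "B \<in> BM" "v = indicator_vec B" by blast
    then obtain k where k: "B = {k}" using assms(2) by (metis card_1_singletonE)
    then have "k \<in> S" using B unfolding S_def is_loop_def by auto
    then show "a \<bullet> v \<ge> 1" using B k by (simp add: a_def ind_inner)
  qed
  have PN: "\<forall>v\<in>indicator_vec ` BN. a \<bullet> v \<ge> real (card S)"
  proof
    fix v assume "v \<in> indicator_vec ` BN"
    then obtain B where B: "B \<in> BN" "v = indicator_vec B" by blast
    then obtain j where j: "B = - {j}" using assms(3) card_m1 by blast
    then have "\<not> is_coloop BN j" using B unfolding is_coloop_def by auto
    then have "j \<notin> S" using no unfolding S_def by auto
    then have "S \<inter> B = S" using j by auto
    then show "a \<bullet> v \<ge> real (card S)" using B by (simp add: a_def ind_inner)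
  qed
  have D1: "\<forall>v\<in>indicator_vec ` {B. card B = 1}. a \<bullet> v \<le> 1"
  proof
    fix v assume "v \<in> indicator_vec ` {B::'n set. card B = 1}"
    then obtain B where B: "card B = 1" "v = indicator_vec B" by blast
    have "card (S \<inter> B) \<le> card B" by (intro card_mono) auto
    then show "a \<bullet> v \<le> 1" using B by (simp add: a_def ind_inner)
  qed
  have D2: "\<forall>v\<in>indicator_vec ` {B. card B = CARD('n) - 1}. a \<bullet> v \<le> real (card S)"
  proof
    fix v assume "v \<in> indicator_vec ` {B::'n set. card B = CARD('n) - 1}"
    then obtain B where B: "v = indicator_vec B" by blast
    have "card (S \<inter> B) \<le> card S" by (intro card_mono) auto
    then show "a \<bullet> v \<le> real (card S)" using B by (simp add: a_def ind_inner)
  qed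
  show "flag_polytope BM BN \<subseteq> rel_frontier (Delta_1_nm1 :: (real^'n) set)"
  proof
    fix x assume "x \<in> flag_polytope BM BN"
    then obtain p q where pq: "x = p + q" "p \<in> matroid_polytope BM" "q \<in> matroid_polytope BN"
      unfolding flag_polytope_def minkowski_sum_def by blast
    have "a \<bullet> p \<ge> 1" using hull_ge[OF PM] pq(2) unfolding matroid_polytope_def by blast
    moreover have "a \<bullet> q \<ge> real (card S)" using hull_ge[OF PN] pq(3) unfolding matroid_polytope_def by blast
    ultimately have ax: "a \<bullet> x \<ge> 1 + real (card S)" using pq(1) by (simp add: inner_add_right)
    have "p \<in> hypersimplex 1"
      using pq(2) assms(2) unfolding matroid_polytope_def hypersimplex_def
      by (metis (mono_tags, lifting) hull_mono image_mono mem_Collect_eq subsetD subsetI)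
    moreover have "q \<in> hypersimplex (CARD('n) - 1)"
      using pq(3) assms(3) unfolding matroid_polytope_def hypersimplex_def
      by (metis (mono_tags, lifting) hull_mono image_mono mem_Collect_eq subsetD subsetI)
    ultimately have xD: "x \<in> Delta_1_nm1"
      unfolding Delta_1_nm1_def minkowski_sum_def using pq(1) by blast
    have bound: "\<forall>z\<in>(Delta_1_nm1 :: (real^'n) set). a \<bullet> z \<le> a \<bullet> x"
    proof
      fix z assume "z \<in> (Delta_1_nm1 :: (real^'n) set)"
      then obtain p' q' where pq': "z = p' + q'" "p' \<in> hypersimplex 1"
          "q' \<in> hypersimplex (CARD('n) - 1)"
        unfolding Delta_1_nm1_def minkowski_sum_def by blast
      have "a \<bullet> p' \<le> 1" using hull_le[OF D1] pq'(2) unfolding hypersimplex_def by blast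
      moreover have "a \<bullet> q' \<le> real (card S)" using hull_le[OF D2] pq'(3) unfolding hypersimplex_def by blast
      ultimately show "a \<bullet> z \<le> a \<bullet> x" using pq'(1) ax by (simp add: inner_add_right)
    qed
    obtain k :: 'n where True by blast
    define y where "y = indicator_vec {k} + (indicator_vec (- {k}) :: real^'n)"
    have "indicator_vec {k} \<in> (hypersimplex 1 :: (real^'n) set)"
      unfolding hypersimplex_def by (intro hull_inc) simp
    moreover have "indicator_vec (- {k}) \<in> (hypersimplex (CARD('n) - 1) :: (real^'n) set)"
      unfolding hypersimplex_def
      by (intro hull_inc) (simp add: Compl_eq_Diff_UNIV card_Diff_singleton)
    ultimately have yD: "y \<in> Delta_1_nm1"
      unfolding Delta_1_nm1_def minkowski_sum_def y_def by blast
    have "card (S \<inter> {k}) + card (S \<inter> - {k}) = card ((S \<inter> {k}) \<union> (S \<inter> - {k}))"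
      by (rule card_Un_disjoint[symmetric]) auto
    also have "(S \<inter> {k}) \<union> (S \<inter> - {k}) = S" by auto
    finally have "card (S \<inter> {k}) + card (S \<inter> - {k}) = card S" .
    then have "a \<bullet> y = real (card S)"
      unfolding y_def a_def by (simp add: inner_add_right ind_inner flip: of_nat_add)
    then have "a \<bullet> y < a \<bullet> x" using ax by linarith
    then have "x \<notin> rel_interior Delta_1_nm1" using not_rel_int[OF xD yD bound] by blast
    then show "x \<in> rel_frontier Delta_1_nm1"
      unfolding rel_frontier_def using xD closure_subset by blast
  qed
qed

end
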